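(* In the MHAV setting described in the context, suppose there is $b>0$ such that for all $\lambda\in\Lambda$ and all $y,y'\in Y$ with $\phi_Y(y,y')>0$, $$\frac{\bar\Pi(\lambda,y')\,\phi_Y(y',y)}{\bar\Pi(\lambda,y)\,\phi_Y(y,y')}>b.$$ Then the Markov kernel $\bar P_{\mathrm{MH}}$ on $\Lambda\times Y$ is irreducible and aperiodic.
   Context: MHAV setting: $Y$ is a finite nonempty set, $f:Y\to\mathbb{R}$; $\Lambda=\{\lambda_1<\lambda_2<\dots<\lambda_n\}$ is a finite set of positive reals with $n\ge2$; $\bar\Pi(\lambda,y)=\lambda^{-f(y)}/Z$ on $\Lambda\times Y$ with $Z=\sum_{\lambda,y}\lambda^{-f(y)}$. $\phi_Y$ is an irreducible Markov kernel on $Y$. For $\alpha'\in(0,1)$, $\phi_\Lambda$ is the kernel on $\Lambda$ with $\phi_\Lambda(\lambda_1,\lambda_2)=1$, $\phi_\Lambda(\lambda_n,\lambda_{n-1})=1$, and for $1<i<n$, $\phi_\Lambda(\lambda_i,\lambda_{i+1})=\alpha'$, $\phi_\Lambda(\lambda_i,\lambda_{i-1})=1-\alpha'$, all other entries $0$. For $\alpha,\beta\in(0,1)$ with $\alpha+\beta<1$, the proposal $\bar\phi$ on $\Lambda\times Y$ is $\bar\phi[(\lambda,y),(\lambda',y')]=\alpha\phi_\Lambda(\lambda,\lambda')$ if $\lambda\ne\lambda',y=y'$; $=\beta\phi_Y(y,y')$ if $\lambda=\lambda',y\ne y'$; $=(1-\alpha-\beta)+\beta\phi_Y(y,y)$ if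 $\lambda=\lambda',y=y'$; and $=0$ if $\lambda\ne\lambda',y\ne y'$. The acceptance probability is $\bar{\mathsf{Acc}}(x,x')=\min\{1,\frac{\bar\phi(x',x)\bar\Pi(x')}{\bar\phi(x,x')\bar\Pi(x)}\}$ and $\bar P_{\mathrm{MH}}(x,x')=\bar\phi(x,x')\bar{\mathsf{Acc}}(x,x')$ for $x\ne x'$, $\bar P_{\mathrm{MH}}(x,x)=1-\sum_{x'\ne x}\bar\phi(x,x')\bar{\mathsf{Acc}}(x,x')$. *)

theory Defs
  imports "HOL-Analysis.Analysis"
begin

definition markov_kernel_on :: "'a set \<Rightarrow> ('a \<Rightarrow> 'a \<Rightarrow> real) \<Rightarrow> bool" where
  "markov_kernel_on S K \<longleftrightarrow>
     (\<forall>x\<in>S. \<forall>y\<in>S. K x y \<ge> 0) \<and> (\<forall>x\<in>S. (\<Sum>y\<in>S. K x y) = 1)"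

fun kpow :: "'a set \<Rightarrow> ('a \<Rightarrow> 'a \<Rightarrow> real) \<Rightarrow> nat \<Rightarrow> 'a \<Rightarrow> 'a \<Rightarrow> real" where
  "kpow S K 0 x z = (if x = z then 1 else 0)"
| "kpow S K (Suc m) x z = (\<Sum>y\<in>S. K x y * kpow S K m y z)"

definition irreducible_on :: "'a set \<Rightarrow> ('a \<Rightarrow> 'a \<Rightarrow> real) \<Rightarrow> bool" where
  "irreducible_on S K \<longleftrightarrow> (\<forall>x\<in>S. \<forall>y\<in>S. \<exists>m. kpow S K m x y > 0)"

definition period :: "'a set \<Rightarrow> ('a \<Rightarrow> 'a \<Rightarrow> real) \<Rightarrow> 'a \<Rightarrow> nat" where
  "period S K x = Gcd {m. m \<ge> 1 \<and> kpow S K m x x > 0}"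

definition aperiodic_on :: "'a set \<Rightarrow> ('a \<Rightarrow> 'a \<Rightarrow> real) \<Rightarrow> bool" where
  "aperiodic_on S K \<longleftrightarrow> (\<forall>x\<in>S. period S K x = 1)"

text \<open>The MHAV construction. Lambda = {lam 1 < ... < lam n}.\<close>

definition Zc :: "real set \<Rightarrow> 'y set \<Rightarrow> ('y \<Rightarrow> real) \<Rightarrow> real" where
  "Zc Lam Y f = (\<Sum>(l, y)\<in>Lam \<times> Y. l powr (- f y))"

definition PiBar :: "real set \<Rightarrow> 'y set \<Rightarrow> ('y \<Rightarrow> real) \<Rightarrow> real \<times> 'y \<Rightarrow> real" where
  "PiBar Lam Y f = (\<lambda>(l, y). l powr (- f y) / Zc Lam Y f)"

definition phiLam :: "(nat \<Rightarrow> real) \<Rightarrow> nat \<Rightarrow> real \<Rightarrow> real \<Rightarrow> real \<Rightarrow> real" where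
  "phiLam lam n \<alpha>' a a' =
     (if a = lam 1 \<and> a' = lam 2 then 1
      else if a = lam n \<and> a' = lam (n - 1) then 1
      else if (\<exists>i. 1 < i \<and> i < n \<and> a = lam i \<and> a' = lam (i + 1)) then \<alpha>'
      else if (\<exists>i. 1 < i \<and> i < n \<and> a = lam i \<and> a' = lam (i - 1)) then 1 - \<alpha>'
      else 0)"

definition phiBar :: "(real \<Rightarrow> real \<Rightarrow> real) \<Rightarrow> ('y \<Rightarrow> 'y \<Rightarrow> real) \<Rightarrow> real \<Rightarrow> real
                       \<Rightarrow> real \<times> 'y \<Rightarrow> real \<times> 'y \<Rightarrow> real" where
  "phiBar phiL phiY \<alpha> \<beta> = (\<lambda>(l, y) (l', y').
     if l \<noteq> l' \<and> y = y' then \<alpha> * phiL l l'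
     else if l = l' \<and> y \<noteq> y' then \<beta> * phiY y y'
     else if l = l' \<and> y = y' then (1 - \<alpha> - \<beta>) + \<beta> * phiY y y
     else 0)"

definition Acc :: "('s \<Rightarrow> 's \<Rightarrow> real) \<Rightarrow> ('s \<Rightarrow> real) \<Rightarrow> 's \<Rightarrow> 's \<Rightarrow> real" where
  "Acc phi P x x' = min 1 ((phi x' x * P x') / (phi x x' * P x))"

definition PMH :: "'s set \<Rightarrow> ('s \<Rightarrow> 's \<Rightarrow> real) \<Rightarrow> ('s \<Rightarrow> real) \<Rightarrow> 's \<Rightarrow> 's \<Rightarrow> real" where
  "PMH S phi P x x' =
     (if x \<noteq> x' then phi x x' * Acc phi P x x'
      else 1 - (\<Sum>z\<in>S - {x}. phi x z * Acc phi P x z))"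

end

theory Submission imports Defs begin
lemma kpow_nonneg:
  assumes "\<forall>x\<in>S. \<forall>y\<in>S. K x y \<ge> 0" "x \<in> S"
  shows "kpow S K m x z \<ge> 0"
  using assms(2)
proof (induction m arbitrary: x)
  case 0 show ?case by simp
next
  case (Suc m) show ?case using Suc assms(1) by (auto intro!: sum_nonneg)
qed

lemma kpow_step:
  assumes "finite S" "\<forall>x\<in>S. \<forall>y\<in>S. K x y \<ge> 0" "x\<in>S" "y\<in>S"
  shows "K x y * kpow S K m y z \<le> kpow S K (Suc m) x z"
  unfolding kpow.simps
proof (rule member_le_sum)
  fix w assume w: "w \<in> S - {y}"
  then have "K x w \<ge> 0" using assms(2,3) by blast
  moreover have "kpow S K m w z \<ge> 0" using kpow_nonneg[OF assms(2)] w by blast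
  ultimately show "0 \<le> K x w * kpow S K m w z" by simp
qed (use assms in auto)

lemma rtr_kpow:
  assumes "finite S" "\<forall>x\<in>S. \<forall>y\<in>S. K x y \<ge> 0"
    "(x,z) \<in> {(a,b). a\<in>S \<and> b\<in>S \<and> K a b > 0}\<^sup>*"
  shows "\<exists>m. kpow S K m x z > 0"
  using assms(3)
proof (induction rule: converse_rtrancl_induct)
  case base show ?case by (intro exI[of _ 0]) simp
next
  case (step u v)
  then obtain m where m: "kpow S K m v z > 0" by blast
  from step(1) have uv: "u\<in>S" "v\<in>S" "K u v > 0" by auto
  have "0 < K u v * kpow S K m v z" using uv m by simp
  also have "\<dots> \<le> kpow S K (Suc m) u z" by (rule kpow_step[OF assms(1,2) uv(1,2)])
  finally show ?case by blast
qed

lemma kpow_rtr: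
  assumes "\<forall>x\<in>S. \<forall>y\<in>S. K x y \<ge> 0" "y\<in>S" "kpow S K m y z > 0"
  shows "(y,z) \<in> {(a,b). a\<in>S \<and> b\<in>S \<and> a\<noteq>b \<and> K a b>0}\<^sup>*"
  using assms(2,3)
proof (induction m arbitrary: y)
  case 0 then show ?case by (simp split: if_splits)
next
  case (Suc m)
  from Suc.prems(2) have "0 < (\<Sum>w\<in>S. K y w * kpow S K m w z)" by simp
  have "\<exists>w. w\<in>S \<and> 0 < K y w * kpow S K m w z"
  proof (rule ccontr)
    assume "\<not> (\<exists>w. w\<in>S \<and> 0 < K y w * kpow S K m w z)"
    then have "(\<Sum>w\<in>S. K y w * kpow S K m w z) \<le> 0" by (intro sum_nonpos) (auto simp: not_less)
    then show False using \<open>0 < (\<Sum>w\<in>S. K y w * kpow S K m w z)\<close> by simp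
  qed
  then obtain w where w: "w\<in>S" "0 < K y w * kpow S K m w z" by blast
  have "kpow S K m w z \<ge> 0" by (rule kpow_nonneg[OF assms(1) w(1)])
  moreover have "K y w \<ge> 0" using assms(1) w(1) Suc.prems(1) by simp
  ultimately have yw: "K y w > 0" "kpow S K m w z > 0" using w(2)
    by (auto simp: zero_less_mult_iff)
  have wz: "(w,z) \<in> {(a,b). a\<in>S \<and> b\<in>S \<and> a\<noteq>b \<and> K a b>0}\<^sup>*" by (rule Suc.IH[OF w(1) yw(2)])
  show ?case
  proof (cases "y=w")
    case True then show ?thesis using wz by simp
  next
    case False
    then have "(y,w) \<in> {(a,b). a\<in>S \<and> b\<in>S \<and> a\<noteq>b \<and> K a b>0}" using yw(1) w(1) Suc.prems(1) by simp
    then show ?thesis using wz by (rule converse_rtrancl_into_rtrancl)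
  qed
qed

lemma phiLam_eq:
  assumes inj: "inj_on lam {1..n}" and n: "n \<ge> 2" and i: "i\<in>{1..n}" and j: "j\<in>{1..n}"
  shows "phiLam lam n a (lam i) (lam j) =
    (if i=1 \<and> j=2 then 1 else if i=n \<and> j=n-1 then 1
     else if 1<i \<and> i<n \<and> j=i+1 then a else if 1<i \<and> i<n \<and> j=i-1 then 1-a else 0)"
proof -
  have eq: "\<And>u v. u\<in>{1..n} \<Longrightarrow> v\<in>{1..n} \<Longrightarrow> lam u = lam v \<longleftrightarrow> u = v"
    using inj by (meson inj_on_eq_iff)
  have e1: "lam i = lam 1 \<longleftrightarrow> i = 1" using eq i n by simp
  have e2: "lam j = lam 2 \<longleftrightarrow> j = 2" using eq j n by simp
  have e3: "lam i = lam n \<longleftrightarrow> i = n" using eq i n by simp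
  have e4: "lam j = lam (n-1) \<longleftrightarrow> j = n-1" using eq j n by simp
  have e5: "(\<exists>k. 1 < k \<and> k < n \<and> lam i = lam k \<and> lam j = lam (k + 1)) \<longleftrightarrow> 1<i \<and> i<n \<and> j=i+1"
  proof
    assume "\<exists>k. 1 < k \<and> k < n \<and> lam i = lam k \<and> lam j = lam (k + 1)"
    then obtain k where "1<k" "k<n" "lam i = lam k" "lam j = lam (k+1)" by blast
    then show "1<i \<and> i<n \<and> j=i+1" using eq[of i k] eq[of j "k+1"] i j by auto
  qed auto
  have e6: "(\<exists>k. 1 < k \<and> k < n \<and> lam i = lam k \<and> lam j = lam (k - 1)) \<longleftrightarrow> 1<i \<and> i<n \<and> j=i-1"
  proof
    assume "\<exists>k. 1 < k \<and> k < n \<and> lam i = lam k \<and> lam j = lam (k - 1)"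
    then obtain k where "1<k" "k<n" "lam i = lam k" "lam j = lam (k-1)" by blast
    moreover have "k-1 \<in> {1..n}" using \<open>1<k\<close> \<open>k<n\<close> by auto
    ultimately show "1<i \<and> i<n \<and> j=i-1" using eq[of i k] eq[of j "k-1"] i j by auto
  qed auto
  show ?thesis unfolding phiLam_def e1 e2 e3 e4 e5 e6 by simp
qed

lemma phiLam_sum:
  assumes inj: "inj_on lam {1..n}" and n: "n \<ge> 2" and i: "i\<in>{1..n}" and a: "0<a" "a<1"
  shows "(\<Sum>j\<in>{1..n}-{i}. phiLam lam n a (lam i) (lam j)) \<le> 1"
proof -
  define p where "p = (if i=1 then 1 else if i = n then 0 else a)"
  define q where "q = (if i=n then 1 else if i=1 then 0 else 1-a)"
  have "(\<Sum>j\<in>{1..n}-{i}. phiLam lam n a (lam i) (lam j))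
     \<le> (\<Sum>j\<in>{1..n}-{i}. (if j = i+1 then p else 0) + (if j = i-1 then q else 0))"
  proof (rule sum_mono)
    fix j assume j: "j \<in> {1..n}-{i}"
    show "phiLam lam n a (lam i) (lam j) \<le> (if j = i+1 then p else 0) + (if j = i-1 then q else 0)"
    proof -
      have jj: "j\<in>{1..n}" "j \<noteq> i" using j by auto
      show ?thesis unfolding phiLam_eq[OF inj n i jj(1)] using jj i n a by (auto simp: p_def q_def)
    qed
  qed
  also have "\<dots> \<le> p + q"
    unfolding sum.distrib using a by (simp add: p_def q_def)
  also have "p + q \<le> 1" using a n by (auto simp: p_def q_def)
  finally show ?thesis .
qed

theorem lemma14:
  fixes Y :: "'y set" and f :: "'y \<Rightarrow> real" and lam :: "nat \<Rightarrow> real" and n :: nat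
    and phiY :: "'y \<Rightarrow> 'y \<Rightarrow> real" and \<alpha> \<beta> \<alpha>' b :: real
  assumes "finite Y" and "Y \<noteq> {}"
    and "n \<ge> 2"
    and "strict_mono_on {1..n} lam" and "\<forall>i\<in>{1..n}. lam i > 0"
    and "markov_kernel_on Y phiY" and "irreducible_on Y phiY"
    and "0 < \<alpha>'" and "\<alpha>' < 1"
    and "0 < \<alpha>" and "\<alpha> < 1" and "0 < \<beta>" and "\<beta> < 1" and "\<alpha> + \<beta> < 1"
    and "b > 0"
    and "\<forall>l\<in>lam ` {1..n}. \<forall>y\<in>Y. \<forall>y'\<in>Y. phiY y y' > 0 \<longrightarrow>
           (PiBar (lam ` {1..n}) Y f (l, y') * phiY y' y) /
           (PiBar (lam ` {1..n}) Y f (l, y) * phiY y y') > b"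
  shows "irreducible_on (lam ` {1..n} \<times> Y)
           (PMH (lam ` {1..n} \<times> Y) (phiBar (phiLam lam n \<alpha>') phiY \<alpha> \<beta>) (PiBar (lam ` {1..n}) Y f))
       \<and> aperiodic_on (lam ` {1..n} \<times> Y)
           (PMH (lam ` {1..n} \<times> Y) (phiBar (phiLam lam n \<alpha>') phiY \<alpha> \<beta>) (PiBar (lam ` {1..n}) Y f))"
proof -
  note finY = assms(1) and Yne = assms(2) and n2 = assms(3)
  define Lam where "Lam = lam ` {1..n}"
  define S where "S = Lam \<times> Y"
  define P where "P = PiBar Lam Y f"
  define phiL where "phiL = phiLam lam n \<alpha>'"
  define phi where "phi = phiBar phiL phiY \<alpha> \<beta>"
  define K where "K = PMH S phi P"
  have inj: "inj_on lam {1..n}" using assms(4) by (rule strict_mono_on_imp_inj_on)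
  have finL: "finite Lam" unfolding Lam_def by simp
  have finS: "finite S" unfolding S_def using finL finY by simp
  have Lne: "Lam \<noteq> {}" unfolding Lam_def using n2 by auto
  have lampos: "\<And>l. l \<in> Lam \<Longrightarrow> l > 0" unfolding Lam_def using assms(5) by auto
  have phiY_nn: "\<And>y y'. y\<in>Y \<Longrightarrow> y'\<in>Y \<Longrightarrow> phiY y y' \<ge> 0"
    using assms(6) unfolding markov_kernel_on_def by blast
  have phiY_sum: "\<And>y. y\<in>Y \<Longrightarrow> (\<Sum>y'\<in>Y. phiY y y') = 1"
    using assms(6) unfolding markov_kernel_on_def by blast
  have Zpos: "Zc Lam Y f > 0" unfolding Zc_def
  proof (rule sum_pos)
    show "finite (Lam \<times> Y)" using finL finY by simp
    show "Lam \<times> Y \<noteq> {}" using Lne Yne by simp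
    fix z assume "z \<in> Lam \<times> Y"
    then obtain l y where "z = (l,y)" "l \<in> Lam" by auto
    then show "0 < (case z of (l, y) \<Rightarrow> l powr - f y)" using lampos[of l] by simp
  qed
  have Ppos: "\<And>x. x\<in>S \<Longrightarrow> P x > 0"
  proof -
    fix x assume "x\<in>S"
    then obtain l y where "x = (l,y)" "l \<in> Lam" unfolding S_def by auto
    then show "P x > 0" unfolding P_def PiBar_def using Zpos lampos[of l] by simp
  qed
  have phiL_nn: "\<And>u v. phiL u v \<ge> 0"
    unfolding phiL_def phiLam_def using assms(8,9) by auto
  have phi_nn: "\<And>x z. x\<in>S \<Longrightarrow> z\<in>S \<Longrightarrow> phi x z \<ge> 0"
  proof -
    fix x z assume "x\<in>S" "z\<in>S"
    then obtain l y l' y' where xz: "x = (l,y)" "z = (l',y')" "y\<in>Y" "y'\<in>Y" unfolding S_def by auto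
    show "phi x z \<ge> 0" unfolding phi_def phiBar_def xz
      using phiL_nn[of l l'] phiY_nn[OF xz(3,4)] phiY_nn[OF xz(3,3)] assms(10,12,14) by auto
  qed
  have Acc_le: "\<And>x z. Acc phi P x z \<le> 1" unfolding Acc_def by simp
  have Acc_nn: "\<And>x z. x\<in>S \<Longrightarrow> z\<in>S \<Longrightarrow> phi x z > 0 \<Longrightarrow> Acc phi P x z \<ge> 0"
  proof -
    fix x z assume h: "x\<in>S" "z\<in>S" "phi x z > 0"
    have "phi z x * P z \<ge> 0" using phi_nn[OF h(2,1)] Ppos[OF h(2)] by simp
    moreover have "phi x z * P x > 0" using h(3) Ppos[OF h(1)] by simp
    ultimately show "Acc phi P x z \<ge> 0" unfolding Acc_def by simp
  qed
  have Acc_pos: "\<And>x z. x\<in>S \<Longrightarrow> z\<in>S \<Longrightarrow> phi x z > 0 \<Longrightarrow> phi z x > 0 \<Longrightarrow> Acc phi P x z > 0"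
    unfolding Acc_def using Ppos by (auto intro!: divide_pos_pos)
  have K_off: "\<And>x z. x \<noteq> z \<Longrightarrow> K x z = phi x z * Acc phi P x z"
    unfolding K_def PMH_def by simp
  have K_off_nn: "\<And>x z. x\<in>S \<Longrightarrow> z\<in>S \<Longrightarrow> x \<noteq> z \<Longrightarrow> K x z \<ge> 0"
  proof -
    fix x z assume xz: "x\<in>S" "z\<in>S" "x \<noteq> z"
    show "K x z \<ge> 0"
    proof (cases "phi x z > 0")
      case True then show ?thesis using K_off[OF xz(3)] Acc_nn[OF xz(1,2)] by simp
    next
      case False then have "phi x z = 0" using phi_nn[OF xz(1,2)] by simp
      then show ?thesis using K_off[OF xz(3)] by simp
    qed
  qed
  have K_diag: "\<And>x. x\<in>S \<Longrightarrow> K x x \<ge> 1 - \<alpha> - \<beta>"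
  proof -
    fix x assume xS: "x\<in>S"
    then obtain l y where x: "x = (l,y)" "l\<in>Lam" "y\<in>Y" unfolding S_def by auto
    obtain i where i: "i\<in>{1..n}" "l = lam i" using x(2) unfolding Lam_def by auto
    define A where "A = (\<lambda>z. if fst z \<noteq> l \<and> snd z = y then \<alpha> * phiL l (fst z) else 0)"
    define B where "B = (\<lambda>z. if fst z = l \<and> snd z \<noteq> y then \<beta> * phiY y (snd z) else 0)"
    have A_nn: "\<And>z. A z \<ge> 0" unfolding A_def using phiL_nn assms(10) by auto
    have B_nn: "\<And>z. z\<in>S \<Longrightarrow> B z \<ge> 0" unfolding B_def S_def using phiY_nn x(3) assms(12) by auto
    have "(\<Sum>z\<in>S-{x}. phi x z * Acc phi P x z) \<le> (\<Sum>z\<in>S-{x}. phi x z)"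
    proof (rule sum_mono)
      fix z assume "z\<in>S-{x}"
      then show "phi x z * Acc phi P x z \<le> phi x z"
        using phi_nn[OF xS, of z] Acc_le[of x z] by (simp add: mult_left_le)
    qed
    also have "\<dots> = (\<Sum>z\<in>S-{x}. A z + B z)"
    proof (rule sum.cong)
      fix z assume "z\<in>S-{x}"
      then obtain l' y' where "z = (l',y')" "(l',y') \<noteq> (l,y)" using x by (cases z) auto
      then show "phi x z = A z + B z" unfolding phi_def phiBar_def A_def B_def x by auto
    qed simp
    also have "\<dots> \<le> (\<Sum>z\<in>S. A z + B z)"
      by (rule sum_mono2) (use finS A_nn B_nn in \<open>auto intro: add_nonneg_nonneg\<close>)
    also have "\<dots> = (\<Sum>z\<in>S. A z) + (\<Sum>z\<in>S. B z)" by (rule sum.distrib)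
    also have "(\<Sum>z\<in>S. A z) = \<alpha> * (\<Sum>l'\<in>Lam-{l}. phiL l l')"
    proof -
      have "(\<Sum>z\<in>S. A z) = (\<Sum>l'\<in>Lam. \<Sum>y'\<in>Y. A (l',y'))"
        unfolding S_def by (simp add: sum.cartesian_product)
      also have "\<dots> = (\<Sum>l'\<in>Lam. if l' \<noteq> l then \<alpha> * phiL l l' else 0)"
        unfolding A_def using finY x(3) by (intro sum.cong) (auto simp: sum.delta' if_distrib cong: if_cong)
      also have "\<dots> = (\<Sum>l'\<in>{l'\<in>Lam. l'\<noteq>l}. \<alpha> * phiL l l')"
        using finL by (simp add: sum.inter_filter)
      also have "{l'\<in>Lam. l'\<noteq>l} = Lam - {l}" by auto
      finally show ?thesis by (simp add: sum_distrib_left)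
    qed
    also have "(\<Sum>z\<in>S. B z) = \<beta> * (1 - phiY y y)"
    proof -
      have "(\<Sum>z\<in>S. B z) = (\<Sum>l'\<in>Lam. \<Sum>y'\<in>Y. B (l',y'))"
        unfolding S_def by (simp add: sum.cartesian_product)
      also have "\<dots> = (\<Sum>l'\<in>Lam. if l' = l then (\<Sum>y'\<in>Y. if y' \<noteq> y then \<beta> * phiY y y' else 0) else 0)"
        unfolding B_def by (intro sum.cong) (auto intro!: sum.cong)
      also have "\<dots> = (\<Sum>y'\<in>Y. if y' \<noteq> y then \<beta> * phiY y y' else 0)"
        using finL x(2) by (simp add: sum.delta')
      also have "\<dots> = (\<Sum>y'\<in>{y'\<in>Y. y'\<noteq>y}. \<beta> * phiY y y')"
        using finY by (simp add: sum.inter_filter)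
      also have "{y'\<in>Y. y'\<noteq>y} = Y - {y}" by auto
      also have "(\<Sum>y'\<in>Y - {y}. \<beta> * phiY y y') = \<beta> * (1 - phiY y y)"
        using phiY_sum[OF x(3)] finY x(3) by (simp add: sum_distrib_left[symmetric] sum_diff1)
      finally show ?thesis .
    qed
    finally have le: "(\<Sum>z\<in>S-{x}. phi x z * Acc phi P x z) \<le> \<alpha> * (\<Sum>l'\<in>Lam-{l}. phiL l l') + \<beta> * (1 - phiY y y)" .
    have "Lam - {l} = lam ` ({1..n} - {i})" unfolding Lam_def i(2) using inj i(1) by (auto simp: inj_on_eq_iff)
    moreover have "inj_on lam ({1..n} - {i})" using inj by (rule inj_on_subset) auto
    ultimately have "(\<Sum>l'\<in>Lam-{l}. phiL l l') = (\<Sum>j\<in>{1..n}-{i}. phiLam lam n \<alpha>' (lam i) (lam j))"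
      unfolding phiL_def i(2) by (simp add: sum.reindex)
    also have "\<dots> \<le> 1" by (rule phiLam_sum[OF inj n2 i(1) assms(8,9)])
    finally have s1: "(\<Sum>l'\<in>Lam-{l}. phiL l l') \<le> 1" .
    have "\<alpha> * (\<Sum>l'\<in>Lam-{l}. phiL l l') \<le> \<alpha>" using s1 assms(10) by (simp add: mult_left_le)
    moreover have "\<beta> * (1 - phiY y y) \<le> \<beta>" using phiY_nn[OF x(3) x(3)] assms(12) by (simp add: mult_left_le)
    ultimately have "(\<Sum>z\<in>S-{x}. phi x z * Acc phi P x z) \<le> \<alpha> + \<beta>" using le by linarith
    then show "K x x \<ge> 1 - \<alpha> - \<beta>" unfolding K_def PMH_def by simp
  qed
  have K_nn: "\<forall>x\<in>S. \<forall>z\<in>S. K x z \<ge> 0"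
  proof (intro ballI)
    fix x z assume xz: "x\<in>S" "z\<in>S"
    show "K x z \<ge> 0"
    proof (cases "x = z")
      case True then show ?thesis using K_diag[OF xz(1)] assms(14) by simp
    next
      case False then show ?thesis using K_off_nn[OF xz False] by simp
    qed
  qed
  define R where "R = {(a,c). a\<in>S \<and> c\<in>S \<and> K a c > 0}"
  have Ystep: "\<And>l y y'. l\<in>Lam \<Longrightarrow> y\<in>Y \<Longrightarrow> y'\<in>Y \<Longrightarrow> y \<noteq> y' \<Longrightarrow> phiY y y' > 0 \<Longrightarrow> ((l,y),(l,y')) \<in> R"
  proof -
    fix l y y' assume h: "l\<in>Lam" "y\<in>Y" "y'\<in>Y" "y \<noteq> y'" "phiY y y' > 0"
    have "(P (l,y') * phiY y' y) / (P (l,y) * phiY y y') > b"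
      using assms(16) h unfolding P_def Lam_def by blast
    then have "(P (l,y') * phiY y' y) / (P (l,y) * phiY y y') > 0" using assms(15) by linarith
    moreover have "P (l,y) * phiY y y' > 0" using Ppos h unfolding S_def by simp
    ultimately have "P (l,y') * phiY y' y > 0" by (simp add: zero_less_divide_iff)
    then have rev: "phiY y' y > 0" using Ppos[of "(l,y')"] h unfolding S_def by (simp add: zero_less_mult_iff)
    have mem: "(l,y)\<in>S" "(l,y')\<in>S" using h unfolding S_def by auto
    have p1: "phi (l,y) (l,y') > 0" unfolding phi_def phiBar_def using h assms(12) by simp
    have p2: "phi (l,y') (l,y) > 0" unfolding phi_def phiBar_def using h rev assms(12) by simp
    have "K (l,y) (l,y') > 0" using K_off[of "(l,y)" "(l,y')"] h Acc_pos[OF mem p1 p2] p1 by simp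
    then show "((l,y),(l,y')) \<in> R" unfolding R_def using mem by simp
  qed
  have Ymove: "\<And>l y y'. l\<in>Lam \<Longrightarrow> (y,y') \<in> {(a,c). a\<in>Y \<and> c\<in>Y \<and> a\<noteq>c \<and> phiY a c>0}\<^sup>* \<Longrightarrow> ((l,y),(l,y')) \<in> R\<^sup>*"
  proof -
    fix l y y' assume l: "l\<in>Lam" and yy: "(y,y') \<in> {(a,c). a\<in>Y \<and> c\<in>Y \<and> a\<noteq>c \<and> phiY a c>0}\<^sup>*"
    from yy show "((l,y),(l,y')) \<in> R\<^sup>*"
    proof (induction rule: rtrancl_induct)
      case base show ?case by simp
    next
      case (step u v)
      then have "((l,v),(l,u)) \<in> R \<or> True" by simp
      have "((l,u),(l,v)) \<in> R" using step(2) Ystep[OF l] by simp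
      then show ?case using step(3) by (simp add: rtrancl.rtrancl_into_rtrancl)
    qed
  qed
  have Lstep: "\<And>i y. 1 \<le> i \<Longrightarrow> i < n \<Longrightarrow> y\<in>Y \<Longrightarrow>
      ((lam i,y),(lam (Suc i),y)) \<in> R \<and> ((lam (Suc i),y),(lam i,y)) \<in> R"
  proof -
    fix i y assume h: "1 \<le> i" "i < n" "y\<in>Y"
    have i1: "i\<in>{1..n}" and i2: "Suc i\<in>{1..n}" using h by auto
    have ne: "lam i \<noteq> lam (Suc i)" using inj i1 i2 by (metis inj_on_eq_iff n_not_Suc_n)
    have f: "phiL (lam i) (lam (Suc i)) > 0" unfolding phiL_def phiLam_eq[OF inj n2 i1 i2]
      using h assms(8,9) by auto
    have g: "phiL (lam (Suc i)) (lam i) > 0" unfolding phiL_def phiLam_eq[OF inj n2 i2 i1]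
      using h assms(8,9) by auto
    have mem: "(lam i,y)\<in>S" "(lam (Suc i),y)\<in>S" using h i1 i2 unfolding S_def Lam_def by auto
    have p1: "phi (lam i,y) (lam (Suc i),y) > 0" unfolding phi_def phiBar_def using ne f assms(10) by simp
    have p2: "phi (lam (Suc i),y) (lam i,y) > 0" unfolding phi_def phiBar_def using ne g assms(10) by simp
    have "K (lam i,y) (lam (Suc i),y) > 0" using K_off ne Acc_pos[OF mem p1 p2] p1 by simp
    moreover have "K (lam (Suc i),y) (lam i,y) > 0" using K_off ne Acc_pos[OF mem(2,1) p2 p1] p2 by simp
    ultimately show "((lam i,y),(lam (Suc i),y)) \<in> R \<and> ((lam (Suc i),y),(lam i,y)) \<in> R"
      unfolding R_def using mem by simp
  qed
  have Lk: "\<And>k i y. 1 \<le> i \<Longrightarrow> i + k \<le> n \<Longrightarrow> y\<in>Y \<Longrightarrow>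
      ((lam i,y),(lam (i+k),y)) \<in> R\<^sup>* \<and> ((lam (i+k),y),(lam i,y)) \<in> R\<^sup>*"
  proof -
    fix k i y assume "1 \<le> i" "i + k \<le> n" "y\<in>Y"
    then show "((lam i,y),(lam (i+k),y)) \<in> R\<^sup>* \<and> ((lam (i+k),y),(lam i,y)) \<in> R\<^sup>*"
    proof (induction k)
      case 0 then show ?case by simp
    next
      case (Suc k)
      then have ih: "((lam i,y),(lam (i+k),y)) \<in> R\<^sup>* \<and> ((lam (i+k),y),(lam i,y)) \<in> R\<^sup>*" by simp
      have st: "((lam (i+k),y),(lam (Suc (i+k)),y)) \<in> R \<and> ((lam (Suc (i+k)),y),(lam (i+k),y)) \<in> R"
        using Lstep[of "i+k" y] Suc.prems by simp
      have "((lam i,y),(lam (Suc (i+k)),y)) \<in> R\<^sup>*"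
        using ih st by (meson rtrancl_into_rtrancl)
      moreover have "((lam (Suc (i+k)),y),(lam i,y)) \<in> R\<^sup>*"
        using ih st by (meson converse_rtrancl_into_rtrancl)
      ultimately show ?case by simp
    qed
  qed
  have Lmove: "\<And>i j y. i\<in>{1..n} \<Longrightarrow> j\<in>{1..n} \<Longrightarrow> y\<in>Y \<Longrightarrow> ((lam i,y),(lam j,y)) \<in> R\<^sup>*"
  proof -
    fix i j y assume h: "i\<in>{1..n}" "j\<in>{1..n}" "y\<in>Y"
    show "((lam i,y),(lam j,y)) \<in> R\<^sup>*"
    proof (cases "i \<le> j")
      case True then show ?thesis using Lk[of i "j-i" y] h by simp
    next
      case False then show ?thesis using Lk[of j "i-j" y] h by simp
    qed
  qed
  have irr: "irreducible_on S K"
    unfolding irreducible_on_def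
  proof (intro ballI)
    fix x z assume xz: "x\<in>S" "z\<in>S"
    then obtain i y j y' where x: "x = (lam i, y)" "z = (lam j, y')" "i\<in>{1..n}" "j\<in>{1..n}" "y\<in>Y" "y'\<in>Y"
      unfolding S_def Lam_def by auto
    obtain m where km: "kpow Y phiY m y y' > 0" using assms(7) x(5,6) unfolding irreducible_on_def by blast
    have ynn: "\<forall>a\<in>Y. \<forall>c\<in>Y. phiY a c \<ge> 0" using phiY_nn by blast
    have "(y,y') \<in> {(a,c). a\<in>Y \<and> c\<in>Y \<and> a\<noteq>c \<and> phiY a c>0}\<^sup>*"
      by (rule kpow_rtr[OF ynn x(5) km])
    moreover have "lam i \<in> Lam" using x(3) unfolding Lam_def by simp
    ultimately have "((lam i,y),(lam i,y')) \<in> R\<^sup>*" using Ymove by simp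
    moreover have "((lam i,y'),(lam j,y')) \<in> R\<^sup>*" by (rule Lmove[OF x(3,4,6)])
    ultimately have "(x,z) \<in> R\<^sup>*" using x by simp
    then show "\<exists>m. kpow S K m x z > 0" using rtr_kpow[OF finS K_nn, of x z] unfolding R_def by simp
  qed
  have aper: "aperiodic_on S K"
    unfolding aperiodic_on_def period_def
  proof (intro ballI)
    fix x assume xS: "x\<in>S"
    have "kpow S K 1 x x = K x x" using finS xS by (simp add: if_distrib sum.delta' cong: if_cong)
    then have "kpow S K 1 x x > 0" using K_diag[OF xS] assms(14) by simp
    then have "1 \<in> {m. m \<ge> 1 \<and> kpow S K m x x > 0}" by simp
    then have "Gcd {m. m \<ge> 1 \<and> kpow S K m x x > 0} dvd 1" by (rule Gcd_dvd)
    then show "Gcd {m. m \<ge> 1 \<and> kpow S K m x x > 0} = 1" by simp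
  qed
  show ?thesis using irr aper unfolding K_def S_def P_def phi_def phiL_def Lam_def by simp
qed

end
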